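(* Let $X$ be a real Hilbert space, $A,B\colon X\rightrightarrows X$ maximally monotone, $T:=\operatorname{Id}-J_A+J_BR_A$, $v:=P_{\overline{\operatorname{ran}}(\operatorname{Id}-T)}(0)$, $D:=\operatorname{dom}A-\operatorname{dom}B$, $R:=\operatorname{ran}A+\operatorname{ran}B$, $v_D:=P_{\overline D}(0)$, $v_R:=P_{\overline R}(0)$, and assume $\overline{\operatorname{ran}}(\operatorname{Id}-T)=\overline{D\cap R}=\overline D\cap\overline R$. Then (i) $v_D=P_{(\operatorname{rec}\overline{\operatorname{dom}}A)^\oplus}v$; (ii) $v_R=P_{-\operatorname{rec}\overline{\operatorname{dom}}A}v$; (iii) $v_D=P_{-\operatorname{rec}\overline{\operatorname{ran}}A}v$; (iv) $v_R=P_{(\operatorname{rec}\overline{\operatorname{ran}}A)^\oplus}v$.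
   Context: $J_C:=(\operatorname{Id}+C)^{-1}$, $R_C:=2J_C-\operatorname{Id}$; $P_S$ is the projection onto a nonempty closed convex set $S$. $\operatorname{rec}C:=\{d:C+d\subseteq C\}$ is the recession cone; $S^\oplus:=\{u:\langle u,s\rangle\ge0\ \forall s\in S\}$ is the dual cone. $\overline{\operatorname{dom}}A,\overline{\operatorname{ran}}A$ are closures of domain and range. *)

theory Defs
  imports "HOL-Analysis.Analysis"
begin

text \<open>Set-valued operators X \<rightrightarrows> X are modelled as functions 'a \<Rightarrow> 'a set.\<close>

definition monotone_op :: "('a::real_inner \<Rightarrow> 'a set) \<Rightarrow> bool" where
  "monotone_op A \<longleftrightarrow> (\<forall>x y u w. u \<in> A x \<longrightarrow> w \<in> A y \<longrightarrow> 0 \<le> inner (x - y) (u - w))"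

definition maximally_monotone :: "('a::real_inner \<Rightarrow> 'a set) \<Rightarrow> bool" where
  "maximally_monotone A \<longleftrightarrow> monotone_op A \<and>
     (\<forall>B. monotone_op B \<and> (\<forall>x. A x \<subseteq> B x) \<longrightarrow> B = A)"

definition dom_op :: "('a \<Rightarrow> 'b set) \<Rightarrow> 'a set" where
  "dom_op A = {x. A x \<noteq> {}}"

definition ran_op :: "('a \<Rightarrow> 'b set) \<Rightarrow> 'b set" where
  "ran_op A = (\<Union>x. A x)"

text \<open>Resolvent J_A = (Id + A)^{-1}: J_A x is the (unique, for monotone A) p with x \<in> p + A p.\<close>
definition resolvent :: "('a::real_inner \<Rightarrow> 'a set) \<Rightarrow> 'a \<Rightarrow> 'a" where
  "resolvent A x = (THE p. x - p \<in> A p)"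

definition reflected_resolvent :: "('a::real_inner \<Rightarrow> 'a set) \<Rightarrow> 'a \<Rightarrow> 'a" where
  "reflected_resolvent A x = 2 *\<^sub>R resolvent A x - x"

text \<open>Metric projection onto S (unique for nonempty closed convex S in a Hilbert space).\<close>
definition proj :: "'a::real_inner set \<Rightarrow> 'a \<Rightarrow> 'a" where
  "proj S a = (THE p. p \<in> S \<and> (\<forall>y\<in>S. dist a p \<le> dist a y))"

definition rec_cone :: "'a::real_vector set \<Rightarrow> 'a set" where
  "rec_cone C = {d. \<forall>c\<in>C. c + d \<in> C}"

definition dual_cone :: "'a::real_inner set \<Rightarrow> 'a set" where
  "dual_cone S = {u. \<forall>s\<in>S. 0 \<le> inner u s}"

end

theory Submission
  imports Defs
begin


lemma aux_ineq: "(a::real) < m + p \<Longrightarrow> b < m + q \<Longrightarrow> p \<le> r \<Longrightarrow> q \<le> r \<Longrightarrow> (a + b) / 2 - m < r"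
  by (simp add: field_simps)

lemma sc_min:
  fixes f :: "'b::{real_inner,complete_space} \<Rightarrow> real" and S :: "'b set"
  assumes ne: "S \<noteq> {}" and lb: "\<And>z. z \<in> S \<Longrightarrow> f z \<ge> 0"
    and cpos: "c > 0"
    and mid: "\<And>a b. a \<in> S \<Longrightarrow> b \<in> S \<Longrightarrow> (1/2) *\<^sub>R (a + b) \<in> S \<and>
                  f ((1/2) *\<^sub>R (a + b)) \<le> (f a + f b) / 2 - c * (norm (a - b))\<^sup>2"
    and lsc: "\<And>z p m. (\<forall>n. z n \<in> S) \<Longrightarrow> z \<longlonglongrightarrow> p \<Longrightarrow> (\<lambda>n. f (z n)) \<longlonglongrightarrow> m \<Longrightarrow> p \<in> S \<and> f p \<le> m"
  shows "\<exists>p\<in>S. \<forall>z\<in>S. f p \<le> f z"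
proof -
  define m where "m = Inf (f ` S)"
  have bdd: "bdd_below (f ` S)" using lb by (auto intro!: bdd_belowI[of _ 0])
  have mle: "\<And>z. z \<in> S \<Longrightarrow> m \<le> f z" unfolding m_def using bdd by (simp add: cInf_lower)
  have "\<forall>n. \<exists>z\<in>S. f z < m + 1 / (real n + 1)"
  proof
    fix n
    have "m < m + 1 / (real n + 1)" by simp
    then show "\<exists>z\<in>S. f z < m + 1 / (real n + 1)"
      unfolding m_def using ne cInf_less_iff[OF _ bdd, of "m + 1 / (real n + 1)"] unfolding m_def by auto
  qed
  then obtain z where zS: "\<And>n. z n \<in> S" and zlt: "\<And>n. f (z n) < m + 1 / (real n + 1)"
    by metis
  have fz: "(\<lambda>n. f (z n)) \<longlonglongrightarrow> m"
  proof (rule tendsto_sandwich[of "\<lambda>n. m" _ _ "\<lambda>n. m + 1 / (real n + 1)"])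
    show "\<forall>\<^sub>F n in sequentially. m \<le> f (z n)" using mle zS by (intro always_eventually allI) auto
    show "\<forall>\<^sub>F n in sequentially. f (z n) \<le> m + 1 / (real n + 1)" using zlt by (intro always_eventually allI less_imp_le)
    show "(\<lambda>n. m) \<longlonglongrightarrow> m" by simp
    show "(\<lambda>n. m + 1 / (real n + 1)) \<longlonglongrightarrow> m"
      using LIMSEQ_inverse_real_of_nat_add[of m] by (simp add: divide_inverse add.commute)
  qed
  have "Cauchy z"
  proof (rule metric_CauchyI)
    fix e :: real assume e: "e > 0"
    obtain N :: nat where N: "1 / (real N + 1) < c * e\<^sup>2"
    proof -
      have "c * e\<^sup>2 > 0" using e cpos by simp
      then obtain N :: nat where "inverse (real (Suc N)) < c * e\<^sup>2" using reals_Archimedean by blast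
      then show ?thesis using that[of N] by (simp add: divide_inverse add.commute)
    qed
    show "\<exists>M. \<forall>i\<ge>M. \<forall>j\<ge>M. dist (z i) (z j) < e"
    proof (intro exI allI impI)
      fix i j assume ij: "N \<le> i" "N \<le> j"
      have ii: "1 / (real i + 1) \<le> 1 / (real N + 1)" using ij by (simp add: frac_le)
      have jj: "1 / (real j + 1) \<le> 1 / (real N + 1)" using ij by (simp add: frac_le)
      from mid[OF zS zS, of i j] have h: "(1/2) *\<^sub>R (z i + z j) \<in> S"
        "f ((1/2) *\<^sub>R (z i + z j)) \<le> (f (z i) + f (z j)) / 2 - c * (norm (z i - z j))\<^sup>2" by auto
      have "m \<le> f ((1/2) *\<^sub>R (z i + z j))" using mle h(1) .
      then have A1: "c * (norm (z i - z j))\<^sup>2 \<le> (f (z i) + f (z j)) / 2 - m" using h(2) by linarith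
      have A2: "(f (z i) + f (z j)) / 2 - m < 1 / (real N + 1)" using zlt[of i] zlt[of j] ii jj
        by (rule_tac aux_ineq) (assumption)+
      have "c * (norm (z i - z j))\<^sup>2 < c * e\<^sup>2" using A1 A2 N by linarith
      then have "(norm (z i - z j))\<^sup>2 < e\<^sup>2" using cpos by simp
      then have "norm (z i - z j) < e" using e by (smt (verit) norm_ge_zero power_mono)
      then show "dist (z i) (z j) < e" by (simp add: dist_norm)
    qed
  qed
  then obtain p where zp: "z \<longlonglongrightarrow> p" using Cauchy_convergent_iff convergent_def by blast
  from lsc[OF _ zp fz] zS have "p \<in> S" "f p \<le> m" by auto
  then show ?thesis using mle by force
qed



lemma fo_aux:
  fixes \<alpha> \<beta> :: real
  assumes b: "\<beta> \<ge> 0" and h: "\<And>t. 0 < t \<Longrightarrow> t \<le> 1 \<Longrightarrow> 0 \<le> \<alpha> + t * \<beta>"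
  shows "0 \<le> \<alpha>"
proof (rule ccontr)
  assume "\<not> 0 \<le> \<alpha>"
  then have a: "\<alpha> < 0" by simp
  define t where "t = - \<alpha> / (\<beta> - \<alpha>)"
  have bp: "\<beta> - \<alpha> > 0" using a b by simp
  have "0 < t" "t \<le> 1" unfolding t_def using a b bp by (auto simp: field_simps)
  from h[OF this] have "0 \<le> \<alpha> + t * \<beta>" .
  moreover have "\<alpha> + t * \<beta> = - (\<alpha>\<^sup>2) / (\<beta> - \<alpha>)"
    unfolding t_def using bp by (simp add: field_simps power2_eq_square)
  moreover have "- (\<alpha>\<^sup>2) / (\<beta> - \<alpha>) < 0" using a bp by (simp add: divide_neg_pos)
  ultimately show False by linarith
qed

lemma norm_sq_expand:
  fixes a y p :: "'b::real_inner"
  shows "(norm (a - y))\<^sup>2 = (norm (a - p))\<^sup>2 + (norm (p - y))\<^sup>2 - 2 * inner (a - p) (y - p)"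
proof -
  have "a - y = (a - p) - (y - p)" by simp
  then have "(norm (a - y))\<^sup>2 = (norm ((a - p) - (y - p)))\<^sup>2" by simp
  also have "\<dots> = (norm (a - p))\<^sup>2 + (norm (y - p))\<^sup>2 - 2 * inner (a - p) (y - p)"
    by (simp add: power2_norm_eq_inner inner_diff_left inner_diff_right inner_commute algebra_simps)
  finally show ?thesis by (simp add: norm_minus_commute)
qed

lemma proj_eqI:
  fixes S :: "'b::real_inner set"
  assumes pS: "p \<in> S" and vi: "\<And>y. y \<in> S \<Longrightarrow> inner (a - p) (y - p) \<le> 0"
  shows "proj S a = p"
  unfolding proj_def
proof (rule the_equality)
  have key: "\<And>y. y \<in> S \<Longrightarrow> (norm (a - p))\<^sup>2 + (norm (p - y))\<^sup>2 \<le> (norm (a - y))\<^sup>2"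
    using vi norm_sq_expand by (smt (verit))
  show "p \<in> S \<and> (\<forall>y\<in>S. dist a p \<le> dist a y)"
  proof (intro conjI ballI pS)
    fix y assume "y \<in> S"
    from key[OF this] have "(norm (a - p))\<^sup>2 \<le> (norm (a - y))\<^sup>2" by (smt (verit) zero_le_power2)
    then show "dist a p \<le> dist a y" by (simp add: dist_norm power2_le_iff_abs_le)
  next
  qed
  fix q assume q: "q \<in> S \<and> (\<forall>y\<in>S. dist a q \<le> dist a y)"
  then have "dist a q \<le> dist a p" using pS by auto
  then have "(norm (a - q))\<^sup>2 \<le> (norm (a - p))\<^sup>2" by (simp add: dist_norm power_mono)
  with key[of q] q have "(norm (p - q))\<^sup>2 \<le> 0" by linarith
  then show "q = p" by simp
qed

lemma half_norm_identity:
  fixes x y :: "'b::real_inner"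
  shows "(norm ((1/2) *\<^sub>R (x + y)))\<^sup>2 = ((norm x)\<^sup>2 + (norm y)\<^sup>2) / 2 - (1/4) * (norm (x - y))\<^sup>2"
  by (simp add: power2_norm_eq_inner inner_add_left inner_add_right inner_diff_left inner_diff_right inner_commute algebra_simps)

lemma half_half: "(1/2) *\<^sub>R a + (1/2) *\<^sub>R a = (a::'b::real_vector)"
proof -
  have "(1/2) *\<^sub>R a + (1/2) *\<^sub>R a = ((1/2) + (1/2)) *\<^sub>R a" by (rule scaleR_add_left[symmetric])
  then show ?thesis by simp
qed

lemma norm_add_scale_sq:
  fixes x d :: "'b::real_inner"
  shows "(norm (x + t *\<^sub>R d))\<^sup>2 = (norm x)\<^sup>2 + 2 * t * inner x d + t\<^sup>2 * (norm d)\<^sup>2"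
  unfolding power2_norm_eq_inner
  by (simp add: inner_add_left inner_add_right inner_commute algebra_simps power2_eq_square)

lemma proj_exists:
  fixes S :: "'b::{real_inner,complete_space} set"
  assumes cl: "closed S" and cv: "convex S" and ne: "S \<noteq> {}"
  shows "proj S a \<in> S \<and> (\<forall>y\<in>S. inner (a - proj S a) (y - proj S a) \<le> 0)"
proof -
  define f where "f z = (norm (z - a))\<^sup>2" for z
  have "\<exists>p\<in>S. \<forall>z\<in>S. f p \<le> f z"
  proof (rule sc_min[of S f "1/4"])
    show "S \<noteq> {}" by fact
    show "\<And>z. z \<in> S \<Longrightarrow> 0 \<le> f z" by (simp add: f_def)
    show "(0::real) < 1/4" by simp
    fix a' b' assume ab: "a' \<in> S" "b' \<in> S"
    have "(1/2) *\<^sub>R (a' + b') = (1 - 1/2) *\<^sub>R a' + (1/2) *\<^sub>R b'" by (simp add: scaleR_add_right)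
    then show "(1/2) *\<^sub>R (a' + b') \<in> S \<and> f ((1/2) *\<^sub>R (a' + b')) \<le> (f a' + f b') / 2 - 1/4 * (norm (a' - b'))\<^sup>2"
    proof -
      have m: "(1/2) *\<^sub>R (a' + b') \<in> S"
        using convexD[OF cv ab, of "1 - 1/2" "1/2"] by (simp add: scaleR_add_right)
      have "(1/2) *\<^sub>R (a' + b') - a = (1/2) *\<^sub>R ((a' - a) + (b' - a))" by (simp add: algebra_simps half_half)
      then have "f ((1/2) *\<^sub>R (a' + b')) = (f a' + f b') / 2 - 1/4 * (norm (a' - b'))\<^sup>2"
        unfolding f_def using half_norm_identity[of "a' - a" "b' - a"] by simp
      with m show ?thesis by simp
    qed
  next
    fix z p m assume z: "\<forall>n. z n \<in> S" "z \<longlonglongrightarrow> p" "(\<lambda>n. f (z n)) \<longlonglongrightarrow> m"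
    have pS: "p \<in> S" using closed_sequentially[OF cl] z by blast
    have "(\<lambda>n. f (z n)) \<longlonglongrightarrow> f p" unfolding f_def
      by (intro tendsto_intros z(2))
    then have "f p = m" using z(3) LIMSEQ_unique by blast
    with pS show "p \<in> S \<and> f p \<le> m" by simp
  qed
  then obtain p where pS: "p \<in> S" and pmin: "\<And>z. z \<in> S \<Longrightarrow> f p \<le> f z" by blast
  have vi: "inner (a - p) (y - p) \<le> 0" if yS: "y \<in> S" for y
  proof -
    have hh: "0 \<le> 2 * inner (p - a) (y - p) + t * (norm (y - p))\<^sup>2" if t: "0 < t" "t \<le> 1" for t
    proof -
      have "p + t *\<^sub>R (y - p) = (1 - t) *\<^sub>R p + t *\<^sub>R y" by (simp add: algebra_simps)
      also have "\<dots> \<in> S" using convexD[OF cv pS yS, of "1 - t" t] t by simp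
      finally have fle: "f p \<le> f (p + t *\<^sub>R (y - p))" using pmin by blast
      have eq: "p + t *\<^sub>R (y - p) - a = (p - a) + t *\<^sub>R (y - p)" by (simp add: algebra_simps)
      have "f (p + t *\<^sub>R (y - p)) = (norm (p - a))\<^sup>2 + 2 * t * inner (p - a) (y - p) + t\<^sup>2 * (norm (y - p))\<^sup>2"
        unfolding f_def eq by (rule norm_add_scale_sq)
      then have "0 \<le> 2 * t * inner (p - a) (y - p) + t\<^sup>2 * (norm (y - p))\<^sup>2"
        using fle unfolding f_def by linarith
      also have "2 * t * inner (p - a) (y - p) + t\<^sup>2 * (norm (y - p))\<^sup>2
          = t * (2 * inner (p - a) (y - p) + t * (norm (y - p))\<^sup>2)"
        by (simp add: power2_eq_square algebra_simps)
      finally have "0 \<le> t * (2 * inner (p - a) (y - p) + t * (norm (y - p))\<^sup>2)" .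
      then show ?thesis using t by (simp add: zero_le_mult_iff)
    qed
    have "0 \<le> 2 * inner (p - a) (y - p)" by (rule fo_aux[of "(norm (y - p))\<^sup>2"]) (auto intro: hh)
    then show ?thesis by (simp add: inner_diff_left inner_diff_right algebra_simps)
  qed
  have "proj S a = p" by (rule proj_eqI[OF pS vi])
  with pS vi show ?thesis by simp
qed



definition mmg :: "('a::real_inner \<times> 'a) set \<Rightarrow> bool" where
  "mmg G \<longleftrightarrow> (\<forall>x u y w. (x,u) \<in> G \<longrightarrow> (y,w) \<in> G \<longrightarrow> 0 \<le> inner (x - y) (u - w)) \<and>
     (\<forall>x u. (\<forall>y w. (y,w) \<in> G \<longrightarrow> 0 \<le> inner (x - y) (u - w)) \<longrightarrow> (x,u) \<in> G)"

lemma mmg_mono: "mmg G \<Longrightarrow> (x,u) \<in> G \<Longrightarrow> (y,w) \<in> G \<Longrightarrow> 0 \<le> inner (x - y) (u - w)"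
  unfolding mmg_def by blast

lemma mmg_max: "mmg G \<Longrightarrow> (\<And>y w. (y,w) \<in> G \<Longrightarrow> 0 \<le> inner (x - y) (u - w)) \<Longrightarrow> (x,u) \<in> G"
  unfolding mmg_def by blast

lemma mmg_ne: "mmg G \<Longrightarrow> G \<noteq> {}"
  using mmg_max[of G 0 0] by auto

lemma maxmono_mmg:
  assumes "maximally_monotone A"
  shows "mmg {(x,u). u \<in> A x}"
  unfolding mmg_def
proof (intro conjI allI impI)
  show "\<And>x u y w. (x, u) \<in> {(x, u). u \<in> A x} \<Longrightarrow> (y, w) \<in> {(x, u). u \<in> A x} \<Longrightarrow> 0 \<le> inner (x - y) (u - w)"
    using assms unfolding maximally_monotone_def monotone_op_def by blast
  fix x u assume h: "\<forall>y w. (y, w) \<in> {(x, u). u \<in> A x} \<longrightarrow> 0 \<le> inner (x - y) (u - w)"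
  define B where "B = A(x := insert u (A x))"
  have "monotone_op B"
    unfolding monotone_op_def
  proof (intro allI impI)
    fix x1 y1 u1 w1 assume a: "u1 \<in> B x1" "w1 \<in> B y1"
    have mA: "\<And>x y u w. u \<in> A x \<Longrightarrow> w \<in> A y \<Longrightarrow> 0 \<le> inner (x - y) (u - w)"
      using assms unfolding maximally_monotone_def monotone_op_def by blast
    have s: "0 \<le> inner (y - x) (w - u)" if "w \<in> A y" for y w
    proof -
      have "inner (y - x) (w - u) = inner (x - y) (u - w)"
        by (metis inner_minus_left inner_minus_right minus_diff_eq)
      then show ?thesis using h that by auto
    qed
    show "0 \<le> inner (x1 - y1) (u1 - w1)"
      using a mA[of u1 x1 w1 y1] h s[of w1 y1] s[of u1 x1] unfolding B_def
      by (auto split: if_splits)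
  qed
  moreover have "\<forall>z. A z \<subseteq> B z" unfolding B_def by auto
  ultimately have "B = A" using assms unfolding maximally_monotone_def by blast
  then have "u \<in> A x" unfolding B_def by (metis fun_upd_same insertI1)
  then show "(x, u) \<in> {(x, u). u \<in> A x}" by simp
qed

lemma mmg_inv:
  assumes "mmg G" shows "mmg ((\<lambda>(x,u). (u,x)) ` G)"
  unfolding mmg_def
proof (intro conjI allI impI)
  fix x u y w assume "(x, u) \<in> (\<lambda>(x, u). (u, x)) ` G" "(y, w) \<in> (\<lambda>(x, u). (u, x)) ` G"
  then have "(u,x) \<in> G" "(w,y) \<in> G" by auto
  from mmg_mono[OF assms this] show "0 \<le> inner (x - y) (u - w)" by (simp add: inner_commute)
next
  fix x u assume h: "\<forall>y w. (y, w) \<in> (\<lambda>(x, u). (u, x)) ` G \<longrightarrow> 0 \<le> inner (x - y) (u - w)"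
  have "(u,x) \<in> G"
  proof (rule mmg_max[OF assms])
    fix y w assume "(y,w) \<in> G"
    then have "(w,y) \<in> (\<lambda>(x, u). (u, x)) ` G" by force
    with h have "0 \<le> inner (x - w) (u - y)" by blast
    then show "0 \<le> inner (u - y) (x - w)" by (simp add: inner_commute)
  qed
  then show "(x, u) \<in> (\<lambda>(x, u). (u, x)) ` G" by force
qed



definition fphi :: "('a::real_inner \<times> 'a) \<Rightarrow> ('a \<times> 'a) \<Rightarrow> real" where
  "fphi p g = inner (fst p) (snd g) + inner (fst g) (snd p) - inner (fst g) (snd g)"

lemma fphi_comb: "fphi ((1 - t) *\<^sub>R a + t *\<^sub>R b) g = (1 - t) * fphi a g + t * fphi b g"
  unfolding fphi_def by (simp add: inner_add_left inner_add_right algebra_simps)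

lemma fphi_mono_eq: "fphi (x,u) (y,w) = inner x u - inner (x - y) (u - w)"
  unfolding fphi_def by (simp add: inner_diff_left inner_diff_right inner_commute)

lemma aux2: fixes A B C N0 N1 I M t :: real
  shows "A + (1/2) * N0 \<le> C + (1/2) * N1 \<Longrightarrow> C \<le> (1-t)*A + t*B \<Longrightarrow> N1 = N0 + 2*t*I + t\<^sup>2*M \<Longrightarrow> 0 \<le> t*(B-A) + t*I + (1/2)*t\<^sup>2*M"
  by (simp add: algebra_simps)

lemma minty0:
  fixes G :: "('a::{real_inner,complete_space} \<times> 'a) set"
  assumes mG: "mmg G"
  shows "\<exists>x. (x, - x) \<in> G"
proof -
  have Gne: "G \<noteq> {}" using mmg_ne[OF mG] .
  define S where "S = {p. bdd_above (fphi p ` G)}"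
  define F where "F p = (SUP g\<in>G. fphi p g)" for p
  define f where "f p = F p + (1/2) * (norm p)\<^sup>2" for p :: "'a \<times> 'a"
  have Fub: "fphi p g \<le> F p" if "p \<in> S" "g \<in> G" for p g
    using that unfolding S_def F_def by (auto intro: cSUP_upper)
  have Fle: "F p \<le> M" if "\<And>g. g \<in> G \<Longrightarrow> fphi p g \<le> M" for p M
    unfolding F_def using Gne that by (auto intro: cSUP_least)
  have Fge: "inner (fst p) (snd p) \<le> F p" if pS: "p \<in> S" for p
  proof (rule ccontr)
    obtain x u where p: "p = (x,u)" by (cases p)
    assume "\<not> inner (fst p) (snd p) \<le> F p"
    then have lt: "F p < inner x u" using p by simp
    have "(x,u) \<in> G"
    proof (rule mmg_max[OF mG])
      fix y w assume "(y,w) \<in> G"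
      from Fub[OF pS this] lt have "fphi (x,u) (y,w) < inner x u" using p by simp
      then show "0 \<le> inner (x - y) (u - w)" by (simp add: fphi_mono_eq)
    qed
    from Fub[OF pS this] have "fphi (x,u) (x,u) \<le> F p" using p by simp
    then show False using lt by (simp add: fphi_mono_eq)
  qed
  have Gsub: "g \<in> S \<and> F g \<le> inner (fst g) (snd g)" if gG: "g \<in> G" for g
  proof -
    obtain y w where g: "g = (y,w)" by (cases g)
    have b: "fphi g g' \<le> inner y w" if "g' \<in> G" for g'
    proof -
      obtain y' w' where g': "g' = (y',w')" by (cases g')
      have "0 \<le> inner (y - y') (w - w')" using mmg_mono[OF mG, of y w y' w'] gG that g g' by simp
      then show ?thesis using g g' by (simp add: fphi_mono_eq)
    qed
    have "g \<in> S" unfolding S_def by (rule CollectI, rule bdd_aboveI2, rule b)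
    moreover have "F g \<le> inner (fst g) (snd g)" using Fle[of g] b g by auto
    ultimately show ?thesis by simp
  qed
  have comb: "(1 - t) *\<^sub>R a + t *\<^sub>R b \<in> S \<and> F ((1 - t) *\<^sub>R a + t *\<^sub>R b) \<le> (1 - t) * F a + t * F b"
    if "a \<in> S" "b \<in> S" "0 \<le> t" "t \<le> 1" for a b t
  proof -
    have hb: "fphi ((1 - t) *\<^sub>R a + t *\<^sub>R b) g \<le> (1 - t) * F a + t * F b" if "g \<in> G" for g
      unfolding fphi_comb
      using Fub[OF \<open>a \<in> S\<close> that] Fub[OF \<open>b \<in> S\<close> that] \<open>0 \<le> t\<close> \<open>t \<le> 1\<close>
      by (intro add_mono mult_left_mono) auto
    have "(1 - t) *\<^sub>R a + t *\<^sub>R b \<in> S" unfolding S_def by (rule CollectI, rule bdd_aboveI2, rule hb)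
    moreover have "F ((1 - t) *\<^sub>R a + t *\<^sub>R b) \<le> (1 - t) * F a + t * F b" by (rule Fle, rule hb)
    ultimately show ?thesis by simp
  qed
  have "\<exists>p\<in>S. \<forall>z\<in>S. f p \<le> f z"
  proof (rule sc_min[of S f "1/8"])
    show "S \<noteq> {}" using Gsub Gne by blast
    show "0 \<le> f z" if "z \<in> S" for z
    proof -
      obtain x u where z: "z = (x,u)" by (cases z)
      have "inner x u \<le> F z" using Fge[OF that] z by simp
      moreover have "(norm z)\<^sup>2 = (norm x)\<^sup>2 + (norm u)\<^sup>2" using z by (simp add: norm_Pair)
      moreover have "0 \<le> (norm (x + u))\<^sup>2" by simp
      moreover have "(norm (x + u))\<^sup>2 = (norm x)\<^sup>2 + 2 * inner x u + (norm u)\<^sup>2"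
        by (simp add: power2_norm_eq_inner inner_add_left inner_add_right inner_commute)
      ultimately show ?thesis unfolding f_def by linarith
    qed
    show "(0::real) < 1/8" by simp
  next
    fix a b assume ab: "a \<in> S" "b \<in> S"
    have e: "(1/2) *\<^sub>R (a + b) = (1 - 1/2) *\<^sub>R a + (1/2) *\<^sub>R b" by (simp add: scaleR_add_right)
    from comb[OF ab, of "1/2"] have c: "(1/2) *\<^sub>R (a + b) \<in> S" "F ((1/2) *\<^sub>R (a + b)) \<le> (F a + F b) / 2"
      unfolding e by auto
    have "(norm ((1/2) *\<^sub>R (a + b)))\<^sup>2 = ((norm a)\<^sup>2 + (norm b)\<^sup>2) / 2 - (1/4) * (norm (a - b))\<^sup>2"
      by (rule half_norm_identity)
    with c show "(1/2) *\<^sub>R (a + b) \<in> S \<and> f ((1/2) *\<^sub>R (a + b)) \<le> (f a + f b) / 2 - 1/8 * (norm (a - b))\<^sup>2"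
      unfolding f_def by (simp add: field_simps)
  next
    fix z p m assume z: "\<forall>n. z n \<in> S" "z \<longlonglongrightarrow> p" "(\<lambda>n. f (z n)) \<longlonglongrightarrow> m"
    have lim2: "(\<lambda>n. f (z n) - (1/2) * (norm (z n))\<^sup>2) \<longlonglongrightarrow> m - (1/2) * (norm p)\<^sup>2"
      by (intro tendsto_intros z)
    have bnd: "fphi p g \<le> m - (1/2) * (norm p)\<^sup>2" if gG: "g \<in> G" for g
    proof (rule LIMSEQ_le[OF _ lim2])
      show "(\<lambda>n. fphi (z n) g) \<longlonglongrightarrow> fphi p g"
        unfolding fphi_def by (intro tendsto_intros z)
      show "\<exists>N. \<forall>n\<ge>N. fphi (z n) g \<le> f (z n) - 1 / 2 * (norm (z n))\<^sup>2"
        using Fub[OF _ gG] z(1) unfolding f_def by auto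
    qed
    then have "p \<in> S" unfolding S_def by (rule_tac CollectI, rule_tac bdd_aboveI2)
    moreover have "F p \<le> m - (1/2) * (norm p)\<^sup>2" using Fle bnd by blast
    ultimately show "p \<in> S \<and> f p \<le> m" unfolding f_def by simp
  qed
  then obtain p where pS: "p \<in> S" and pmin: "\<And>z. z \<in> S \<Longrightarrow> f p \<le> f z" by blast
  obtain x0 u0 where p: "p = (x0,u0)" by (cases p)
  have key: "(norm (x0 + u0))\<^sup>2 \<le> inner (y + u0) (w + x0)" if yw: "(y,w) \<in> G" for y w
  proof -
    define z where "z = (y,w)"
    have zS: "z \<in> S" and Fz: "F z \<le> inner y w" using Gsub[of z] yw unfolding z_def by auto
    have "0 \<le> (F z - F p + inner p (z - p)) + t * ((1/2) * (norm (z - p))\<^sup>2)" if t: "0 < t" "t \<le> 1" for t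
    proof -
      have e: "(1 - t) *\<^sub>R p + t *\<^sub>R z = p + t *\<^sub>R (z - p)" by (simp add: algebra_simps)
      from comb[OF pS zS, of t] t have c: "p + t *\<^sub>R (z - p) \<in> S"
        "F (p + t *\<^sub>R (z - p)) \<le> (1 - t) * F p + t * F z" unfolding e by auto
      have "f p \<le> f (p + t *\<^sub>R (z - p))" using pmin[OF c(1)] .
      moreover have "(norm (p + t *\<^sub>R (z - p)))\<^sup>2 = (norm p)\<^sup>2 + 2 * t * inner p (z - p) + t\<^sup>2 * (norm (z - p))\<^sup>2"
        by (rule norm_add_scale_sq)
      ultimately have "0 \<le> t * (F z - F p) + t * inner p (z - p) + (1/2) * t\<^sup>2 * (norm (z - p))\<^sup>2"
        using c(2) unfolding f_def by (rule_tac aux2) auto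
      also have "\<dots> = t * ((F z - F p + inner p (z - p)) + t * ((1/2) * (norm (z - p))\<^sup>2))"
        by (simp add: algebra_simps power2_eq_square)
      finally show ?thesis using t by (simp add: zero_le_mult_iff)
    qed
    then have "0 \<le> F z - F p + inner p (z - p)" by (rule_tac fo_aux[of "(1/2) * (norm (z - p))\<^sup>2"]) auto
    moreover have "inner x0 u0 \<le> F p" using Fge[OF pS] p by simp
    ultimately have "0 \<le> inner y w - inner x0 u0 + inner x0 (y - x0) + inner u0 (w - u0)"
      using Fz unfolding p z_def by simp
    also have "\<dots> = inner (y + u0) (w + x0) - (norm (x0 + u0))\<^sup>2"
      by (simp add: power2_norm_eq_inner inner_add_left inner_add_right inner_diff_left inner_diff_right inner_commute)
    finally show ?thesis by simp
  qed
  have inG: "(- u0, - x0) \<in> G"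
  proof (rule mmg_max[OF mG])
    fix y w assume "(y,w) \<in> G"
    from key[OF this] have "0 \<le> inner (y + u0) (w + x0)" by (smt (verit) zero_le_power2)
    moreover have "inner (- u0 - y) (- x0 - w) = inner (y + u0) (w + x0)"
    proof -
      have e1: "- u0 - y = -(y+u0)" and e2: "- x0 - w = -(w+x0)" by simp_all
      have "inner (- u0 - y) (- x0 - w) = inner (-(y+u0)) (-(w+x0))" by (simp only: e1 e2)
      also have "\<dots> = inner (y + u0) (w + x0)" by (simp only: inner_minus_left inner_minus_right minus_minus)
      finally show ?thesis .
    qed
    ultimately show "0 \<le> inner (- u0 - y) (- x0 - w)" by simp
  qed
  from key[OF inG] have "(norm (x0 + u0))\<^sup>2 \<le> 0" by simp
  then have "x0 + u0 = 0" by simp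
  then have "u0 = - x0" by (metis neg_eq_iff_add_eq_0)
  with inG show ?thesis by auto
qed



lemma minty_gen:
  fixes G :: "('a::{real_inner,complete_space} \<times> 'a) set"
  assumes mG: "mmg G" and l: "l > 0"
  shows "\<exists>x. (x, (1/l) *\<^sub>R (z - x)) \<in> G"
proof -
  define G' where "G' = (\<lambda>(x,u). (x - z, l *\<^sub>R u)) ` G"
  have memG': "(a, b) \<in> G' \<longleftrightarrow> (a + z, (1/l) *\<^sub>R b) \<in> G" for a b
  proof
    assume "(a,b) \<in> G'"
    then obtain x u where "(x,u) \<in> G" "a = x - z" "b = l *\<^sub>R u" unfolding G'_def by auto
    then show "(a + z, (1/l) *\<^sub>R b) \<in> G" using l by simp
  next
    assume h: "(a + z, (1/l) *\<^sub>R b) \<in> G"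
    have "(a, b) = (\<lambda>(x,u). (x - z, l *\<^sub>R u)) (a + z, (1/l) *\<^sub>R b)" using l by simp
    then show "(a,b) \<in> G'" unfolding G'_def using h by blast
  qed
  have "mmg G'"
    unfolding mmg_def
  proof (intro conjI allI impI)
    fix x u y w assume "(x, u) \<in> G'" "(y, w) \<in> G'"
    then have "(x + z, (1/l) *\<^sub>R u) \<in> G" "(y + z, (1/l) *\<^sub>R w) \<in> G" using memG' by auto
    from mmg_mono[OF mG this] have "0 \<le> inner (x - y) ((1/l) *\<^sub>R (u - w))"
      by (simp add: scaleR_diff_right)
    then have h0: "0 \<le> (1/l) * inner (x - y) (u - w)" by (simp only: inner_scaleR_right)
    have "0 \<le> l * ((1/l) * inner (x - y) (u - w))" using h0 l by (simp only: mult_nonneg_nonneg less_imp_le)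
    then show "0 \<le> inner (x - y) (u - w)" using l by simp
  next
    fix x u assume h: "\<forall>y w. (y, w) \<in> G' \<longrightarrow> 0 \<le> inner (x - y) (u - w)"
    have "(x + z, (1/l) *\<^sub>R u) \<in> G"
    proof (rule mmg_max[OF mG])
      fix y w assume "(y,w) \<in> G"
      then have "(y - z, l *\<^sub>R w) \<in> G'" using memG' l by simp
      with h have "0 \<le> inner (x - (y - z)) (u - l *\<^sub>R w)" by blast
      moreover have "inner (x + z - y) ((1/l) *\<^sub>R u - w) = (1/l) * inner (x - (y - z)) (u - l *\<^sub>R w)"
        using l by (simp add: inner_diff_right inner_diff_left algebra_simps)
      ultimately show "0 \<le> inner (x + z - y) ((1/l) *\<^sub>R u - w)" using l by simp
    qed
    then show "(x, u) \<in> G'" using memG' by simp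
  qed
  from minty0[OF this] obtain y where "(y, - y) \<in> G'" by blast
  then have "(y + z, (1/l) *\<^sub>R (- y)) \<in> G" using memG' by simp
  moreover have "z - (y + z) = - y" by simp
  ultimately show ?thesis by metis
qed

lemma dom_closure_convex:
  fixes G :: "('a::{real_inner,complete_space} \<times> 'a) set"
  assumes mG: "mmg G"
  shows "convex (closure (fst ` G))"
proof -
  have combo: "(1 - t) *\<^sub>R a + t *\<^sub>R b \<in> closure (fst ` G)"
    if a: "(a, al) \<in> G" and b: "(b, be) \<in> G" and t: "0 \<le> t" "t \<le> 1" for a al b be t
  proof -
    define z where "z = (1 - t) *\<^sub>R a + t *\<^sub>R b"
    define K where "K = \<bar>(1 - t) * inner (a - z) al + t * inner (b - z) be\<bar>"
    define M where "M = norm al + norm be"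
    have est: "(norm (x - z))\<^sup>2 \<le> l * (K + M * norm (x - z))"
      if l: "l > 0" "l \<le> 1" and x: "(x, (1/l) *\<^sub>R (z - x)) \<in> G" for l x
    proof -
      have m1: "0 \<le> inner (x - a) ((1/l) *\<^sub>R (z - x) - al)" using mmg_mono[OF mG x a] .
      have m2: "0 \<le> inner (x - b) ((1/l) *\<^sub>R (z - x) - be)" using mmg_mono[OF mG x b] .
      have i1: "l * inner (x - a) al \<le> inner (x - a) (z - x)"
      proof -
        have "0 \<le> l * inner (x - a) ((1/l) *\<^sub>R (z - x) - al)" using m1 l by simp
        also have "\<dots> = inner (x - a) (z - x) - l * inner (x - a) al"
          using l by (simp add: inner_diff_right algebra_simps)
        finally show ?thesis by simp
      qed
      have i2: "l * inner (x - b) be \<le> inner (x - b) (z - x)"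
      proof -
        have "0 \<le> l * inner (x - b) ((1/l) *\<^sub>R (z - x) - be)" using m2 l by simp
        also have "\<dots> = inner (x - b) (z - x) - l * inner (x - b) be"
          using l by (simp add: inner_diff_right algebra_simps)
        finally show ?thesis by simp
      qed
      have sumeq: "(1 - t) * inner (x - a) (z - x) + t * inner (x - b) (z - x) = - (norm (x - z))\<^sup>2"
      proof -
        have "(1 - t) * inner (x - a) (z - x) + t * inner (x - b) (z - x)
            = inner ((1 - t) *\<^sub>R (x - a) + t *\<^sub>R (x - b)) (z - x)"
          by (simp add: inner_add_left)
        also have "(1 - t) *\<^sub>R (x - a) + t *\<^sub>R (x - b) = x - z"
          unfolding z_def by (simp add: algebra_simps)
        also have "inner (x - z) (z - x) = - (norm (x - z))\<^sup>2"
        proof -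
          have "z - x = - (x - z)" by simp
          then show ?thesis by (simp only: inner_minus_right power2_norm_eq_inner)
        qed
        finally show ?thesis .
      qed
      have A: "l * ((1 - t) * inner (x - a) al + t * inner (x - b) be) \<le> - (norm (x - z))\<^sup>2"
      proof -
        have "l * ((1 - t) * inner (x - a) al + t * inner (x - b) be)
            = (1 - t) * (l * inner (x - a) al) + t * (l * inner (x - b) be)" by (simp add: algebra_simps)
        also have "\<dots> \<le> (1 - t) * inner (x - a) (z - x) + t * inner (x - b) (z - x)"
          using i1 i2 t by (intro add_mono mult_left_mono) auto
        finally show ?thesis using sumeq by simp
      qed
      define P where "P = (1 - t) * inner (x - z) al + t * inner (x - z) be"
      define Q where "Q = (1 - t) * inner (a - z) al + t * inner (b - z) be"
      have B: "(1 - t) * inner (x - a) al + t * inner (x - b) be = P - Q"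
        unfolding P_def Q_def by (simp add: inner_diff_left algebra_simps)
      have C: "\<bar>P\<bar> \<le> M * norm (x - z)"
        unfolding P_def
      proof -
        have "\<bar>(1 - t) * inner (x - z) al\<bar> \<le> norm (x - z) * norm al"
        proof -
          have "\<bar>(1 - t) * inner (x - z) al\<bar> = (1 - t) * \<bar>inner (x - z) al\<bar>" using t by (simp add: abs_mult)
          also have "\<dots> \<le> 1 * \<bar>inner (x - z) al\<bar>" using t by (intro mult_right_mono) auto
          also have "\<dots> \<le> norm (x - z) * norm al" using Cauchy_Schwarz_ineq2 by simp
          finally show ?thesis .
        qed
        moreover have "\<bar>t * inner (x - z) be\<bar> \<le> norm (x - z) * norm be"
        proof -
          have "\<bar>t * inner (x - z) be\<bar> = t * \<bar>inner (x - z) be\<bar>" using t by (simp add: abs_mult)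
          also have "\<dots> \<le> 1 * \<bar>inner (x - z) be\<bar>" using t by (intro mult_right_mono) auto
          also have "\<dots> \<le> norm (x - z) * norm be" using Cauchy_Schwarz_ineq2 by simp
          finally show ?thesis .
        qed
        ultimately show "\<bar>(1 - t) * inner (x - z) al + t * inner (x - z) be\<bar> \<le> M * norm (x - z)"
          unfolding M_def by (simp add: algebra_simps)
      qed
      have KQ: "K = \<bar>Q\<bar>" unfolding K_def Q_def ..
      have "Q - P \<le> K + M * norm (x - z)" using C KQ abs_ge_self[of Q] abs_ge_minus_self[of P] by linarith
      then have D: "l * (Q - P) \<le> l * (K + M * norm (x - z))" using l by (intro mult_left_mono) auto
      have "(norm (x - z))\<^sup>2 \<le> l * (Q - P)" using A unfolding B by (simp add: algebra_simps)
      then show ?thesis using D by linarith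
    qed
    have "z \<in> closure (fst ` G)"
      unfolding closure_approachable
    proof (intro allI impI)
      fix e :: real assume e: "e > 0"
      define l where "l = min 1 (e / (2 * (K / e + M + 1)))"
      have Kp: "K \<ge> 0" unfolding K_def by simp
      have Mp: "M \<ge> 0" unfolding M_def by simp
      have den: "2 * (K / e + M + 1) > 0" using Kp Mp e by (simp add: add_nonneg_pos)
      have l0: "l > 0" "l \<le> 1" unfolding l_def using e den by auto
      have lsm: "l * (K / e + M) < e"
      proof -
        have "l * (K / e + M) \<le> (e / (2 * (K / e + M + 1))) * (K / e + M)"
          unfolding l_def using Kp Mp e by (intro mult_right_mono) (auto simp: add_nonneg_nonneg)
        also have "\<dots> < e"
        proof -
          define c where "c = K / e + M"
          have c0: "c \<ge> 0" unfolding c_def using Kp Mp e by simp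
          have "c / (2 * (c + 1)) < 1" using c0 by (simp add: divide_less_eq)
          then have "e * (c / (2 * (c + 1))) < e * 1" using e by (intro mult_strict_left_mono) auto
          then show ?thesis unfolding c_def by (simp add: algebra_simps)
        qed
        finally show ?thesis .
      qed
      obtain x where x: "(x, (1/l) *\<^sub>R (z - x)) \<in> G" using minty_gen[OF mG l0(1)] by blast
      have "norm (x - z) < e"
      proof (rule ccontr)
        assume "\<not> norm (x - z) < e"
        then have r: "norm (x - z) \<ge> e" by simp
        have "(norm (x - z))\<^sup>2 \<le> l * (K + M * norm (x - z))" by (rule est[OF l0 x])
        also have "K \<le> (K / e) * norm (x - z)"
        proof -
          have "K = (K / e) * e" using e by simp
          also have "\<dots> \<le> (K / e) * norm (x - z)" using r Kp e by (intro mult_left_mono) auto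
          finally show ?thesis .
        qed
        then have "l * (K + M * norm (x - z)) \<le> l * ((K / e + M) * norm (x - z))"
          using l0 by (intro mult_left_mono) (auto simp: algebra_simps)
        finally have "norm (x - z) * norm (x - z) \<le> (l * (K / e + M)) * norm (x - z)"
          by (simp add: power2_eq_square algebra_simps)
        moreover have "0 < norm (x - z)" using r e by linarith
        ultimately have "norm (x - z) \<le> l * (K / e + M)" by (rule mult_right_le_imp_le)
        then show False using lsm r by simp
      qed
      then show "\<exists>y\<in>fst ` G. dist y z < e" using x by (force simp: dist_norm)
    qed
    then show ?thesis unfolding z_def .
  qed
  show ?thesis
  proof (rule convexI)
    fix p q :: 'a and s t :: real
    assume pq: "p \<in> closure (fst ` G)" "q \<in> closure (fst ` G)" and st: "0 \<le> s" "0 \<le> t" "s + t = 1"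
    obtain xp where xp: "\<And>n. xp n \<in> fst ` G" "xp \<longlonglongrightarrow> p" using pq(1) closure_sequential by metis
    obtain xq where xq: "\<And>n. xq n \<in> fst ` G" "xq \<longlonglongrightarrow> q" using pq(2) closure_sequential by metis
    have "\<And>n. s *\<^sub>R xp n + t *\<^sub>R xq n \<in> closure (fst ` G)"
    proof -
      fix n
      obtain al where a: "(xp n, al) \<in> G" using xp(1)[of n] by force
      obtain be where b: "(xq n, be) \<in> G" using xq(1)[of n] by force
      have "s = 1 - t" using st by simp
      then have eq: "s *\<^sub>R xp n + t *\<^sub>R xq n = (1 - t) *\<^sub>R xp n + t *\<^sub>R xq n" by simp
      have "t \<le> 1" using st by simp
      then have cc: "(1 - t) *\<^sub>R xp n + t *\<^sub>R xq n \<in> closure (fst ` G)" using combo[OF a b, of t] st by simp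
      show "s *\<^sub>R xp n + t *\<^sub>R xq n \<in> closure (fst ` G)" unfolding eq by (rule cc)
    qed
    moreover have "(\<lambda>n. s *\<^sub>R xp n + t *\<^sub>R xq n) \<longlonglongrightarrow> s *\<^sub>R p + t *\<^sub>R q"
      by (intro tendsto_intros xp xq)
    ultimately show "s *\<^sub>R p + t *\<^sub>R q \<in> closure (fst ` G)"
      by (rule closed_sequentially[OF closed_closure])
  qed
qed



lemma barrierM:
  fixes G :: "('a::{real_inner,complete_space} \<times> 'a) set"
  assumes mG: "mmg G" and ha: "\<And>x u. (x,u) \<in> G \<Longrightarrow> inner a x \<le> \<alpha>"
    and hb: "\<And>x u. (x,u) \<in> G \<Longrightarrow> inner b u \<le> \<beta>"
  shows "inner a b \<le> 0"
proof (rule ccontr)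
  assume "\<not> inner a b \<le> 0"
  then have c: "inner a b > 0" by simp
  obtain x0 y0 where g0: "(x0,y0) \<in> G" using mmg_ne[OF mG] by auto
  define t where "t = (\<bar>\<alpha> - inner a x0\<bar> + \<bar>\<beta> - inner b y0\<bar> + 1) / inner a b"
  have tc: "t * inner a b = \<bar>\<alpha> - inner a x0\<bar> + \<bar>\<beta> - inner b y0\<bar> + 1"
    unfolding t_def using c by simp
  have t0: "t > 0" unfolding t_def using c by (simp add: add_nonneg_pos)
  have "(x0 + t *\<^sub>R b, y0 + t *\<^sub>R a) \<in> G"
  proof (rule mmg_max[OF mG])
    fix x y assume xy: "(x,y) \<in> G"
    have "inner (x0 + t *\<^sub>R b - x) (y0 + t *\<^sub>R a - y)
        = inner (x0 - x) (y0 - y) + t * (inner a x0 - inner a x) + t * (inner b y0 - inner b y) + t * (t * inner a b)"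
      by (simp add: inner_add_left inner_add_right inner_diff_left inner_diff_right inner_commute algebra_simps)
    moreover have "0 \<le> inner (x0 - x) (y0 - y)" using mmg_mono[OF mG g0 xy] .
    moreover have "0 \<le> t * (inner a x0 - inner a x) + t * (inner b y0 - inner b y) + t * (t * inner a b)"
    proof -
      have "0 \<le> (inner a x0 - inner a x) + (inner b y0 - inner b y) + t * inner a b"
        using ha[OF xy] hb[OF xy] tc by linarith
      then have "0 \<le> t * ((inner a x0 - inner a x) + (inner b y0 - inner b y) + t * inner a b)"
        using t0 by simp
      then show ?thesis by (simp add: algebra_simps)
    qed
    ultimately show "0 \<le> inner (x0 + t *\<^sub>R b - x) (y0 + t *\<^sub>R a - y)" by linarith
  qed
  from ha[OF this] have "inner a x0 + t * inner a b \<le> \<alpha>" by (simp add: inner_add_right)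
  then show False using tc by linarith
qed

lemma barrierN:
  fixes S :: "'a::{real_inner,complete_space} set"
  assumes cv: "convex (closure S)" and cS: "c \<in> closure S"
    and hb: "\<And>u \<alpha>. (\<And>x. x \<in> S \<Longrightarrow> inner u x \<le> \<alpha>) \<Longrightarrow> inner u b \<le> 0"
  shows "c + b \<in> closure S"
proof (rule ccontr)
  assume nin: "c + b \<notin> closure S"
  define q where "q = proj (closure S) (c + b)"
  have ne: "closure S \<noteq> {}" using cS by auto
  from proj_exists[OF closed_closure cv ne, of "c + b"] have qS: "q \<in> closure S"
    and vi: "\<And>y. y \<in> closure S \<Longrightarrow> inner (c + b - q) (y - q) \<le> 0" unfolding q_def by auto
  define u where "u = c + b - q"
  have u0: "u \<noteq> 0" unfolding u_def using qS nin by auto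
  have "inner u x \<le> inner u q" if "x \<in> S" for x
    using vi[of x] that closure_subset unfolding u_def by (auto simp: inner_diff_right)
  then have ub: "inner u b \<le> 0" using hb by blast
  have "inner u (c - q) \<le> 0" using vi[OF cS] unfolding u_def .
  moreover have "inner u b = inner u u + inner u (q - c)"
    unfolding u_def by (simp add: inner_diff_right inner_add_right inner_diff_left inner_add_left algebra_simps)
  moreover have "inner u (q - c) = - inner u (c - q)" by (simp add: inner_diff_right)
  moreover have "inner u u > 0" using u0 by simp
  ultimately show False using ub by linarith
qed

lemma rec_bar:
  fixes S :: "'a::real_inner set"
  assumes hu: "\<And>x. x \<in> S \<Longrightarrow> inner u x \<le> \<alpha>" and k: "k \<in> rec_cone (closure S)" and ne: "S \<noteq> {}"
  shows "inner u k \<le> 0"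
proof (rule ccontr)
  assume "\<not> inner u k \<le> 0"
  then have kp: "inner u k > 0" by simp
  have hc: "inner u x \<le> \<alpha>" if "x \<in> closure S" for x
  proof -
    have "closure S \<subseteq> {x. inner u x \<le> \<alpha>}"
      using hu by (intro closure_minimal) (auto simp: closed_halfspace_le)
    then show ?thesis using that by auto
  qed
  obtain c where c: "c \<in> S" using ne by auto
  have cn: "c + real n *\<^sub>R k \<in> closure S" for n
  proof (induction n)
    case 0 then show ?case using c closure_subset by auto
  next
    case (Suc n)
    have "c + real n *\<^sub>R k + k \<in> closure S" using Suc k unfolding rec_cone_def by blast
    then show ?case by (simp add: algebra_simps)
  qed
  obtain n :: nat where n: "(\<alpha> - inner u c) / inner u k < real n" using reals_Archimedean2 by blast
  have "inner u c + real n * inner u k \<le> \<alpha>" using hc[OF cn[of n]] by (simp add: inner_add_right)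
  moreover have "\<alpha> - inner u c < real n * inner u k" using n kp by (simp add: divide_less_eq)
  ultimately show False by linarith
qed

lemma closure_diff_sub:
  fixes S T :: "'a::real_normed_vector set"
  assumes "x \<in> closure S" "y \<in> closure T"
  shows "x - y \<in> closure {a - b | a b. a \<in> S \<and> b \<in> T}"
proof -
  obtain xs where xs: "\<And>n. xs n \<in> S" "xs \<longlonglongrightarrow> x" using assms(1) closure_sequential by metis
  obtain ys where ys: "\<And>n. ys n \<in> T" "ys \<longlonglongrightarrow> y" using assms(2) closure_sequential by metis
  have m: "\<forall>n. xs n - ys n \<in> {a - b | a b. a \<in> S \<and> b \<in> T}" using xs ys by blast
  have t: "(\<lambda>n. xs n - ys n) \<longlonglongrightarrow> x - y" by (intro tendsto_intros xs ys)
  show ?thesis by (rule iffD2[OF closure_sequential], rule exI[of _ "\<lambda>n. xs n - ys n"], rule conjI[OF m t])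
qed

lemma closure_sum_sub:
  fixes S T :: "'a::real_normed_vector set"
  assumes "x \<in> closure S" "y \<in> closure T"
  shows "x + y \<in> closure {a + b | a b. a \<in> S \<and> b \<in> T}"
proof -
  obtain xs where xs: "\<And>n. xs n \<in> S" "xs \<longlonglongrightarrow> x" using assms(1) closure_sequential by metis
  obtain ys where ys: "\<And>n. ys n \<in> T" "ys \<longlonglongrightarrow> y" using assms(2) closure_sequential by metis
  have m: "\<forall>n. xs n + ys n \<in> {a + b | a b. a \<in> S \<and> b \<in> T}" using xs ys by blast
  have t: "(\<lambda>n. xs n + ys n) \<longlonglongrightarrow> x + y" by (intro tendsto_intros xs ys)
  show ?thesis by (rule iffD2[OF closure_sequential], rule exI[of _ "\<lambda>n. xs n + ys n"], rule conjI[OF m t])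
qed

lemma closure_transl:
  fixes D :: "'a::real_normed_vector set"
  assumes h: "\<And>d. d \<in> D \<Longrightarrow> d + w \<in> closure D" and z: "z \<in> closure D"
  shows "z + w \<in> closure D"
proof -
  obtain ds where ds: "\<And>n. ds n \<in> D" "ds \<longlonglongrightarrow> z" using z closure_sequential by metis
  have "\<And>n. ds n + w \<in> closure D" using h ds by blast
  moreover have "(\<lambda>n. ds n + w) \<longlonglongrightarrow> z + w" by (intro tendsto_intros ds)
  ultimately show ?thesis by (rule closed_sequentially[OF closed_closure])
qed

lemma convex_closure_diffs:
  fixes S T :: "'a::real_normed_vector set"
  assumes "convex (closure S)" "convex (closure T)"
  shows "convex (closure {a - b | a b. a \<in> S \<and> b \<in> T})"
proof -
  define M where "M = (\<Union>x\<in>closure S. \<Union>y\<in>closure T. {x - y})"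
  have cM: "convex M" unfolding M_def by (rule convex_differences[OF assms])
  have s1: "{a - b | a b. a \<in> S \<and> b \<in> T} \<subseteq> M" unfolding M_def using closure_subset by blast
  have s2: "M \<subseteq> closure {a - b | a b. a \<in> S \<and> b \<in> T}" unfolding M_def using closure_diff_sub by blast
  have "closure {a - b | a b. a \<in> S \<and> b \<in> T} = closure M"
    using closure_mono[OF s1] closure_minimal[OF s2 closed_closure] by (rule subset_antisym)
  then show ?thesis using cM by simp
qed

lemma convex_closure_sums:
  fixes S T :: "'a::real_normed_vector set"
  assumes "convex (closure S)" "convex (closure T)"
  shows "convex (closure {a + b | a b. a \<in> S \<and> b \<in> T})"
proof -
  define M where "M = (\<Union>x\<in>closure S. \<Union>y\<in>closure T. {x + y})"
  have cM: "convex M" unfolding M_def by (rule convex_sums[OF assms])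
  have s1: "{a + b | a b. a \<in> S \<and> b \<in> T} \<subseteq> M" unfolding M_def using closure_subset by blast
  have s2: "M \<subseteq> closure {a + b | a b. a \<in> S \<and> b \<in> T}" unfolding M_def using closure_sum_sub by blast
  have "closure {a + b | a b. a \<in> S \<and> b \<in> T} = closure M"
    using closure_mono[OF s1] closure_minimal[OF s2 closed_closure] by (rule subset_antisym)
  then show ?thesis using cM by simp
qed

lemma dom_op_G: "dom_op A = fst ` {(x,u). u \<in> A x}"
  unfolding dom_op_def by force

lemma ran_op_G: "ran_op A = fst ` ((\<lambda>(x,u). (u,x)) ` {(x,u). u \<in> A x})"
  unfolding ran_op_def by force



lemma proj0:
  fixes S :: "'a::{real_inner,complete_space} set"
  assumes "closed S" "convex S" "S \<noteq> {}"
  shows "proj S 0 \<in> S \<and> (\<forall>y\<in>S. inner (proj S 0) (proj S 0) \<le> inner (proj S 0) y)"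
proof -
  from proj_exists[OF assms, of 0] show ?thesis by (auto simp: inner_diff_right)
qed

lemma mmg_facts:
  fixes A :: "'a::{real_inner,complete_space} \<Rightarrow> 'a set"
  assumes "maximally_monotone A"
  shows "convex (closure (dom_op A))" "convex (closure (ran_op A))"
    "dom_op A \<noteq> {}" "ran_op A \<noteq> {}"
    "\<And>a \<alpha> b \<beta>. (\<And>x. x \<in> dom_op A \<Longrightarrow> inner a x \<le> \<alpha>) \<Longrightarrow> (\<And>y. y \<in> ran_op A \<Longrightarrow> inner b y \<le> \<beta>) \<Longrightarrow> inner a b \<le> 0"
proof -
  define G where "G = {(x,u). u \<in> A x}"
  have mG: "mmg G" unfolding G_def by (rule maxmono_mmg[OF assms])
  have mGi: "mmg ((\<lambda>(x,u). (u,x)) ` G)" by (rule mmg_inv[OF mG])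
  show "convex (closure (dom_op A))" unfolding dom_op_G G_def[symmetric] by (rule dom_closure_convex[OF mG])
  show "convex (closure (ran_op A))" unfolding ran_op_G G_def[symmetric] by (rule dom_closure_convex[OF mGi])
  show "dom_op A \<noteq> {}" unfolding dom_op_G G_def[symmetric] using mmg_ne[OF mG] by simp
  show "ran_op A \<noteq> {}" unfolding ran_op_G G_def[symmetric] using mmg_ne[OF mGi] by simp
  fix a \<alpha> b \<beta>
  assume ha: "\<And>x. x \<in> dom_op A \<Longrightarrow> inner a x \<le> \<alpha>" and hb: "\<And>y. y \<in> ran_op A \<Longrightarrow> inner b y \<le> \<beta>"
  show "inner a b \<le> 0"
  proof (rule barrierM[OF mG])
    fix x u assume "(x,u) \<in> G"
    then have "x \<in> dom_op A" "u \<in> ran_op A" unfolding G_def dom_op_def ran_op_def by auto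
    then show "inner a x \<le> \<alpha>" "inner b u \<le> \<beta>" using ha hb by auto
  qed
qed

theorem corollary3p5:
  fixes A B :: "'a::{real_inner, complete_space} \<Rightarrow> 'a set"
    and T :: "'a \<Rightarrow> 'a" and v vD vR :: 'a and D R :: "'a set"
  assumes "maximally_monotone A" and "maximally_monotone B"
    and T_def: "T = (\<lambda>x. x - resolvent A x + resolvent B (reflected_resolvent A x))"
    and v_def: "v = proj (closure (range (\<lambda>x. x - T x))) 0"
    and D_def: "D = {a - b | a b. a \<in> dom_op A \<and> b \<in> dom_op B}"
    and R_def: "R = {a + b | a b. a \<in> ran_op A \<and> b \<in> ran_op B}"
    and vD_def: "vD = proj (closure D) 0"
    and vR_def: "vR = proj (closure R) 0"
    and h1: "closure (range (\<lambda>x. x - T x)) = closure (D \<inter> R)"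
    and h2: "closure (D \<inter> R) = closure D \<inter> closure R"
  shows "vD = proj (dual_cone (rec_cone (closure (dom_op A)))) v
       \<and> vR = proj (uminus ` rec_cone (closure (dom_op A))) v
       \<and> vD = proj (uminus ` rec_cone (closure (ran_op A))) v
       \<and> vR = proj (dual_cone (rec_cone (closure (ran_op A)))) v"
proof -
  note FA = mmg_facts[OF assms(1)] and FB = mmg_facts[OF assms(2)]
  obtain a0 where a0: "a0 \<in> dom_op A" using FA(3) by auto
  obtain b0 where b0: "b0 \<in> dom_op B" using FB(3) by auto
  obtain a0' where a0': "a0' \<in> ran_op A" using FA(4) by auto
  obtain b0' where b0': "b0' \<in> ran_op B" using FB(4) by auto
  have cD: "convex (closure D)" unfolding D_def by (rule convex_closure_diffs[OF FA(1) FB(1)])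
  have cR: "convex (closure R)" unfolding R_def by (rule convex_closure_sums[OF FA(2) FB(2)])
  have "a0 - b0 \<in> D" unfolding D_def using a0 b0 by blast
  then have neD: "closure D \<noteq> {}" by (auto simp: closure_eq_empty)
  have "a0' + b0' \<in> R" unfolding R_def using a0' b0' by blast
  then have neR: "closure R \<noteq> {}" by (auto simp: closure_eq_empty)
  from proj0[OF closed_closure cD neD] have vD_in: "vD \<in> closure D"
    and vD_vi: "\<And>y. y \<in> closure D \<Longrightarrow> inner vD vD \<le> inner vD y" unfolding vD_def[symmetric] by auto
  from proj0[OF closed_closure cR neR] have vR_in: "vR \<in> closure R"
    and vR_vi: "\<And>y. y \<in> closure R \<Longrightarrow> inner vR vR \<le> inner vR y" unfolding vR_def[symmetric] by auto
  have inD: "x - y \<in> closure D" if "x \<in> dom_op A" "y \<in> dom_op B" for x y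
  proof -
    have "x - y \<in> D" unfolding D_def using that by blast
    then show ?thesis by (rule subsetD[OF closure_subset])
  qed
  have inR: "x + y \<in> closure R" if "x \<in> ran_op A" "y \<in> ran_op B" for x y
  proof -
    have "x + y \<in> R" unfolding R_def using that by blast
    then show ?thesis by (rule subsetD[OF closure_subset])
  qed
  have barDA: "inner (- vD) x \<le> - inner vD vD - inner vD b0" if "x \<in> dom_op A" for x
    using vD_vi[OF inD[OF that b0]] by (simp add: inner_diff_right)
  have barDB: "inner vD y \<le> inner vD a0 - inner vD vD" if "y \<in> dom_op B" for y
    using vD_vi[OF inD[OF a0 that]] by (simp add: inner_diff_right)
  have barRA: "inner (- vR) x \<le> inner vR b0' - inner vR vR" if "x \<in> ran_op A" for x
    using vR_vi[OF inR[OF that b0']] by (simp add: inner_add_right)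
  have barRB: "inner (- vR) y \<le> inner vR a0' - inner vR vR" if "y \<in> ran_op B" for y
    using vR_vi[OF inR[OF a0' that]] by (simp add: inner_add_right)
  have recA: "- vR \<in> rec_cone (closure (dom_op A))"
    unfolding rec_cone_def
  proof (intro CollectI ballI)
    fix c assume c: "c \<in> closure (dom_op A)"
    show "c + - vR \<in> closure (dom_op A)"
    proof (rule barrierN[OF FA(1) c])
      fix u \<alpha> assume "\<And>x. x \<in> dom_op A \<Longrightarrow> inner u x \<le> \<alpha>"
      from FA(5)[OF this barRA] show "inner u (- vR) \<le> 0" .
    qed
  qed
  have recB: "- vR \<in> rec_cone (closure (dom_op B))"
    unfolding rec_cone_def
  proof (intro CollectI ballI)
    fix c assume c: "c \<in> closure (dom_op B)"
    show "c + - vR \<in> closure (dom_op B)"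
    proof (rule barrierN[OF FB(1) c])
      fix u \<alpha> assume "\<And>x. x \<in> dom_op B \<Longrightarrow> inner u x \<le> \<alpha>"
      from FB(5)[OF this barRB] show "inner u (- vR) \<le> 0" .
    qed
  qed
  have recRA: "- vD \<in> rec_cone (closure (ran_op A))"
    unfolding rec_cone_def
  proof (intro CollectI ballI)
    fix c assume c: "c \<in> closure (ran_op A)"
    show "c + - vD \<in> closure (ran_op A)"
    proof (rule barrierN[OF FA(2) c])
      fix u \<alpha> assume "\<And>x. x \<in> ran_op A \<Longrightarrow> inner u x \<le> \<alpha>"
      from FA(5)[OF barDA this] show "inner u (- vD) \<le> 0" by (simp add: inner_commute)
    qed
  qed
  have recRB: "vD \<in> rec_cone (closure (ran_op B))"
    unfolding rec_cone_def
  proof (intro CollectI ballI)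
    fix c assume c: "c \<in> closure (ran_op B)"
    show "c + vD \<in> closure (ran_op B)"
    proof (rule barrierN[OF FB(2) c])
      fix u \<alpha> assume "\<And>x. x \<in> ran_op B \<Longrightarrow> inner u x \<le> \<alpha>"
      from FB(5)[OF barDB this] show "inner u vD \<le> 0" by (simp add: inner_commute)
    qed
  qed
  have dualA: "vD \<in> dual_cone (rec_cone (closure (dom_op A)))"
    unfolding dual_cone_def
  proof (intro CollectI ballI)
    fix k assume "k \<in> rec_cone (closure (dom_op A))"
    from rec_bar[OF barDA this FA(3)] show "0 \<le> inner vD k" by simp
  qed
  have dualRA: "vR \<in> dual_cone (rec_cone (closure (ran_op A)))"
    unfolding dual_cone_def
  proof (intro CollectI ballI)
    fix k assume "k \<in> rec_cone (closure (ran_op A))"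
    from rec_bar[OF barRA this FA(4)] show "0 \<le> inner vR k" by simp
  qed
  have o1: "0 \<le> inner vD (- vR)" using dualA recA unfolding dual_cone_def by blast
  have o2: "inner vD (- vR) \<le> 0" using rec_bar[OF barDB recB FB(3)] .
  have orth: "inner vD vR = 0" using o1 o2 by simp
  have w1: "vD + vR \<in> closure D"
  proof (rule closure_transl[OF _ vD_in])
    fix d assume "d \<in> D"
    then obtain x y where xy: "x \<in> dom_op A" "y \<in> dom_op B" "d = x - y" unfolding D_def by blast
    have "y \<in> closure (dom_op B)" using xy(2) by (rule subsetD[OF closure_subset])
    then have yy: "y + - vR \<in> closure (dom_op B)" using recB unfolding rec_cone_def by blast
    have xx: "x \<in> closure (dom_op A)" using xy(1) by (rule subsetD[OF closure_subset])
    have mm: "x - (y + - vR) \<in> closure D" unfolding D_def by (rule closure_diff_sub[OF xx yy])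
    have e: "d + vR = x - (y + - vR)" using xy(3) by (simp add: algebra_simps)
    show "d + vR \<in> closure D" unfolding e by (rule mm)
  qed
  have w2: "vR + vD \<in> closure R"
  proof (rule closure_transl[OF _ vR_in])
    fix r assume "r \<in> R"
    then obtain x y where xy: "x \<in> ran_op A" "y \<in> ran_op B" "r = x + y" unfolding R_def by blast
    have "y \<in> closure (ran_op B)" using xy(2) by (rule subsetD[OF closure_subset])
    then have yy: "y + vD \<in> closure (ran_op B)" using recRB unfolding rec_cone_def by blast
    have xx: "x \<in> closure (ran_op A)" using xy(1) by (rule subsetD[OF closure_subset])
    have mm: "x + (y + vD) \<in> closure R" unfolding R_def by (rule closure_sum_sub[OF xx yy])
    have e: "r + vD = x + (y + vD)" using xy(3) by (simp add: algebra_simps)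
    show "r + vD \<in> closure R" unfolding e by (rule mm)
  qed
  have vsum: "v = vD + vR"
  proof -
    have "v = proj (closure D \<inter> closure R) 0" using v_def h1 h2 by simp
    also have "\<dots> = vD + vR"
    proof (rule proj_eqI)
      show "vD + vR \<in> closure D \<inter> closure R" using w1 w2 by (simp add: add.commute)
      fix y assume y: "y \<in> closure D \<inter> closure R"
      have "inner vD vD \<le> inner vD y" "inner vR vR \<le> inner vR y" using vD_vi vR_vi y by auto
      moreover have "inner (0 - (vD + vR)) (y - (vD + vR))
          = inner vD vD + inner vR vR + 2 * inner vD vR - inner vD y - inner vR y"
        by (simp add: inner_add_left inner_add_right inner_diff_left inner_diff_right inner_commute algebra_simps)
      ultimately show "inner (0 - (vD + vR)) (y - (vD + vR)) \<le> 0" using orth by linarith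
    qed
    finally show ?thesis .
  qed
  have vmD: "v - vD = vR" and vmR: "v - vR = vD" using vsum by simp_all
  show ?thesis
  proof (intro conjI)
    show "vD = proj (dual_cone (rec_cone (closure (dom_op A)))) v"
    proof (rule proj_eqI[symmetric, OF dualA])
      fix y assume "y \<in> dual_cone (rec_cone (closure (dom_op A)))"
      then have "0 \<le> inner y (- vR)" using recA unfolding dual_cone_def by blast
      then show "inner (v - vD) (y - vD) \<le> 0" unfolding vmD using orth
        by (simp add: inner_diff_right inner_commute)
    qed
    show "vR = proj (uminus ` rec_cone (closure (dom_op A))) v"
    proof (rule proj_eqI[symmetric])
      show "vR \<in> uminus ` rec_cone (closure (dom_op A))" using recA by (metis image_eqI minus_minus)
      fix y assume "y \<in> uminus ` rec_cone (closure (dom_op A))"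
      then obtain k where k: "k \<in> rec_cone (closure (dom_op A))" "y = - k" by blast
      have "0 \<le> inner vD k" using dualA k(1) unfolding dual_cone_def by blast
      then show "inner (v - vR) (y - vR) \<le> 0" unfolding vmR k(2) using orth
        by (simp add: inner_diff_right)
    qed
    show "vD = proj (uminus ` rec_cone (closure (ran_op A))) v"
    proof (rule proj_eqI[symmetric])
      show "vD \<in> uminus ` rec_cone (closure (ran_op A))" using recRA by (metis image_eqI minus_minus)
      fix y assume "y \<in> uminus ` rec_cone (closure (ran_op A))"
      then obtain k where k: "k \<in> rec_cone (closure (ran_op A))" "y = - k" by blast
      have "0 \<le> inner vR k" using dualRA k(1) unfolding dual_cone_def by blast
      then show "inner (v - vD) (y - vD) \<le> 0" unfolding vmD k(2) using orth
        by (simp add: inner_diff_right inner_commute)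
    qed
    show "vR = proj (dual_cone (rec_cone (closure (ran_op A)))) v"
    proof (rule proj_eqI[symmetric, OF dualRA])
      fix y assume "y \<in> dual_cone (rec_cone (closure (ran_op A)))"
      then have "0 \<le> inner y (- vD)" using recRA unfolding dual_cone_def by blast
      then show "inner (v - vR) (y - vR) \<le> 0" unfolding vmR using orth
        by (simp add: inner_diff_right inner_commute)
    qed
  qed
qed


end
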